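(* Let $G$ be a finite simple graph with $n$ vertices $v_1,\dots,v_n$ and let $\bar{\bar{d}}=\sqrt{\frac{d(v_1)^2+\cdots+d(v_n)^2}{n}}$. Let $u_1,u_2,\dots,u_r$, $r\geq 2$, be a $\beta$-sequence in $G$ such that $$d(u_1)+d(u_2)+\cdots+d(u_r)\leq (r-1)n.$$ Then $$r\geq \frac{n}{n-\bar{\bar{d}}}.$$
   Context: All graphs are finite, undirected, without loops or multiple edges; $d(v)$ is the degree of $v$ in $G$, $N(v)$ is the set of neighbours of $v$, and $N(u_1,\dots,u_k)=\bigcap_{i=1}^k N(u_i)$. A sequence $u_1,\dots,u_r$ of vertices of $G$ is a $\beta$-sequence if (i) $d(u_1)=\max\{d(v): v\in V(G)\}$ and (ii) for $2\le i\le r$, $u_i\in N(u_1,\dots,u_{i-1})$ and $d(u_i)=\max\{d(v): v\in N(u_1,\dots,u_{i-1})\}$. *)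

theory Defs
  imports Complex_Main
begin

definition simple_graph :: "'a set \<Rightarrow> ('a \<Rightarrow> 'a \<Rightarrow> bool) \<Rightarrow> bool" where
  "simple_graph V E \<longleftrightarrow> finite V \<and> (\<forall>x y. E x y \<longrightarrow> x \<in> V \<and> y \<in> V)
     \<and> (\<forall>x y. E x y \<longrightarrow> E y x) \<and> (\<forall>x. \<not> E x x)"

definition deg :: "'a set \<Rightarrow> ('a \<Rightarrow> 'a \<Rightarrow> bool) \<Rightarrow> 'a \<Rightarrow> nat" where
  "deg V E v = card {w \<in> V. E v w}"

definition common_nbrs :: "'a set \<Rightarrow> ('a \<Rightarrow> 'a \<Rightarrow> bool) \<Rightarrow> 'a set \<Rightarrow> 'a set" where
  "common_nbrs V E S = {w \<in> V. \<forall>u \<in> S. E u w}"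

text \<open>A beta-sequence u_1,...,u_r, represented as the list us = [u_1,...,u_r]
(0-based indexing: us!0 = u_1).\<close>
definition beta_seq :: "'a set \<Rightarrow> ('a \<Rightarrow> 'a \<Rightarrow> bool) \<Rightarrow> 'a list \<Rightarrow> bool" where
  "beta_seq V E us \<longleftrightarrow> us \<noteq> [] \<and> us ! 0 \<in> V
     \<and> deg V E (us ! 0) = Max (deg V E ` V)
     \<and> (\<forall>i. 1 \<le> i \<and> i < length us \<longrightarrow>
          us ! i \<in> common_nbrs V E (set (take i us))
        \<and> deg V E (us ! i) = Max (deg V E ` common_nbrs V E (set (take i us))))"

end

theory Submission imports Defs begin

lemma tangent_pt:
  fixes x r :: real
  assumes "0 \<le> x" "x \<le> 1" "r \<ge> 2"
  shows "x*(1-x)^2 \<le> (1/r)*(1-1/r)^2 + (1-1/r)*(1-3/r)*(x-1/r)"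
proof -
  define a where "a = 1/r"
  have a: "a \<le> 1/2" "0 < a" using assms(3) by (auto simp: a_def field_simps)
  have id: "a*(1-a)^2 + (1-a)*(1-3*a)*(x-a) - x*(1-x)^2 = -((x-a)^2 * (x - 2*(1-a)))"
    by (simp add: power2_eq_square algebra_simps)
  have "(x-a)^2 * (x - 2*(1-a)) \<le> 0"
    using a assms by (intro mult_nonneg_nonpos) auto
  hence "x*(1-x)^2 \<le> a*(1-a)^2 + (1-a)*(1-3*a)*(x-a)" using id by linarith
  thus ?thesis by (simp add: a_def)
qed

lemma key_bounded:
  fixes x s :: "nat \<Rightarrow> real" and xl sl :: real and R :: nat
  assumes R: "R \<ge> 1"
    and xs: "\<forall>i<R. 0 \<le> x i \<and> 0 \<le> s i \<and> x i \<le> 1 - s i"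
    and "0 \<le> xl" "0 \<le> sl" "xl \<le> 1 - sl"
    and sum1: "(\<Sum>i<R. x i) + xl = 1"
  shows "(\<Sum>i<R. x i * (s i)^2) + xl * sl^2 \<le> (real R / (real R + 1))^2"
proof -
  define r where "r = real R + 1"
  have r2: "r \<ge> 2" using R by (simp add: r_def)
  define K where "K = (1/r)*(1-1/r)^2"
  define M where "M = (1-1/r)*(1-3/r)"
  have t: "y*(1-y)^2 \<le> K + M*(y - 1/r)" if "0 \<le> y" "y \<le> 1" for y
    using tangent_pt[OF that r2] by (simp add: K_def M_def)
  have "(\<Sum>i<R. x i * (s i)^2) \<le> (\<Sum>i<R. K + M*(x i - 1/r))"
  proof (rule sum_mono)
    fix i assume "i \<in> {..<R}"
    hence h: "0 \<le> x i" "0 \<le> s i" "x i \<le> 1 - s i" using xs by auto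
    have "(s i)^2 \<le> (1 - x i)^2" using h by (intro power_mono) auto
    hence "x i * (s i)^2 \<le> x i * (1 - x i)^2" using h by (intro mult_left_mono) auto
    also have "\<dots> \<le> K + M*(x i - 1/r)" using h by (intro t) auto
    finally show "x i * (s i)^2 \<le> K + M*(x i - 1/r)" .
  qed
  moreover have "xl * sl^2 \<le> K + M*(xl - 1/r)"
  proof -
    have "sl^2 \<le> (1 - xl)^2" using assms by (intro power_mono) auto
    hence "xl * sl^2 \<le> xl * (1 - xl)^2" using assms by (intro mult_left_mono) auto
    also have "\<dots> \<le> K + M*(xl - 1/r)" using assms by (intro t) auto
    finally show ?thesis .
  qed
  moreover have "(\<Sum>i<R. K + M*(x i - 1/r)) + (K + M*(xl - 1/r)) = r*K + M*(1 - r*(1/r))"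
  proof -
    have "(\<Sum>i<R. K + M*(x i - 1/r)) = real R * K + M * (\<Sum>i<R. x i) - real R * (M * (1/r))"
      by (simp add: sum.distrib sum_subtractf sum_distrib_left[symmetric] right_diff_distrib)
    moreover have "M * (\<Sum>i<R. x i) = M - M * xl" using sum1 by (simp add: algebra_simps flip: distrib_left)
    moreover have "r*K = real R * K + K" "M*(1 - r*(1/r)) = M - real R * (M * (1/r)) - M * (1/r)"
      by (simp_all add: r_def field_simps)
    moreover have "K + M*(xl - 1/r) = K + M*xl - M*(1/r)" by (simp add: algebra_simps)
    ultimately show ?thesis by linarith
  qed
  moreover have "r*K + M*(1 - r*(1/r)) = (real R / (real R + 1))^2"
  proof -
    have r0: "r \<noteq> 0" using r2 by simp
    have "1 - 1/r = real R / (real R + 1)" by (simp add: r_def field_simps)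
    moreover have "r*K = (1-1/r)^2" using r0 by (simp add: K_def)
    ultimately show ?thesis using r0 by simp
  qed
  ultimately show ?thesis by linarith
qed

lemma key:
  fixes x s :: "nat \<Rightarrow> real" and xl sl :: real and R :: nat
  assumes R: "R \<ge> 1"
    and xs: "\<forall>i<R. 0 \<le> x i \<and> 0 \<le> s i \<and> x i \<le> 1 - s i \<and> sl \<le> s i"
    and "0 \<le> xl" "0 \<le> sl" "sl \<le> 1"
    and sum1: "(\<Sum>i<R. x i) + xl = 1"
    and sums: "(\<Sum>i<R. s i) + sl \<le> real R"
  shows "(\<Sum>i<R. x i * (s i)^2) + xl * sl^2 \<le> (real R / (real R + 1))^2"
proof (cases "xl \<le> 1 - sl")
  case True
  then show ?thesis using key_bounded[OF R _ assms(3,4) True sum1] xs by auto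
next
  case False
  define e where "e = xl - (1 - sl)"
  define sk where "sk i = 1 - s i - x i" for i
  define S where "S = (\<Sum>i<R. sk i)"
  have e: "e > 0" using False by (simp add: e_def)
  have "S = real R - (\<Sum>i<R. s i) - (\<Sum>i<R. x i)"
    by (simp add: S_def sk_def sum_subtractf)
  hence Se: "S \<ge> e" using sum1 sums by (simp add: e_def)
  hence S0: "S > 0" using e by linarith
  define t where "t = e / S"
  have t: "0 < t" "t \<le> 1" using e S0 Se by (auto simp: t_def field_simps)
  have tS: "t * S = e" using S0 by (simp add: t_def)
  define x' where "x' i = x i + t * sk i" for i
  have sk0: "\<forall>i<R. 0 \<le> sk i" using xs by (auto simp: sk_def)
  have b: "(\<Sum>i<R. x' i * (s i)^2) + (1 - sl) * sl^2 \<le> (real R / (real R + 1))^2"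
  proof (rule key_bounded[OF R])
    show "\<forall>i<R. 0 \<le> x' i \<and> 0 \<le> s i \<and> x' i \<le> 1 - s i"
    proof (intro allI impI conjI)
      fix i assume i: "i < R"
      have "0 \<le> t * sk i" using t sk0 i by simp
      thus "0 \<le> x' i" using xs i by (simp add: x'_def)
      show "0 \<le> s i" using xs i by simp
      have "t * sk i \<le> 1 * sk i" using t sk0 i by (intro mult_right_mono) auto
      thus "x' i \<le> 1 - s i" by (simp add: x'_def sk_def)
    qed
    show "(\<Sum>i<R. x' i) + (1 - sl) = 1"
      using sum1 tS by (simp add: x'_def sum.distrib sum_distrib_left[symmetric] S_def e_def)
  qed (use assms in auto)
  have "(\<Sum>i<R. x i * (s i)^2) + xl * sl^2 \<le> (\<Sum>i<R. x' i * (s i)^2) + (1 - sl) * sl^2"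
  proof -
    have "(\<Sum>i<R. t * sk i * sl^2) \<le> (\<Sum>i<R. t * sk i * (s i)^2)"
    proof (rule sum_mono)
      fix i assume "i \<in> {..<R}"
      hence "0 \<le> t * sk i" "sl^2 \<le> (s i)^2" using t sk0 xs assms(4) by (auto intro: power_mono)
      thus "t * sk i * sl^2 \<le> t * sk i * (s i)^2" by (intro mult_left_mono) auto
    qed
    moreover have "(\<Sum>i<R. t * sk i * sl^2) = e * sl^2"
      using tS by (simp add: sum_distrib_right[symmetric] sum_distrib_left[symmetric] S_def)
    moreover have "(\<Sum>i<R. x' i * (s i)^2) = (\<Sum>i<R. x i * (s i)^2) + (\<Sum>i<R. t * sk i * (s i)^2)"
      by (simp add: x'_def sum.distrib distrib_right)
    ultimately show ?thesis by (simp add: e_def algebra_simps)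
  qed
  with b show ?thesis by linarith
qed


lemma telescope:
  fixes A :: "nat \<Rightarrow> 'a set" and f :: "'a \<Rightarrow> real"
  assumes fin: "\<And>i. finite (A i)" and mono: "\<And>i. i < k \<Longrightarrow> A (Suc i) \<subseteq> A i"
  shows "(\<Sum>v\<in>A 0. f v) = (\<Sum>i<k. \<Sum>v\<in>A i - A (Suc i). f v) + (\<Sum>v\<in>A k. f v)"
  using mono
proof (induction k)
  case 0 then show ?case by simp
next
  case (Suc k)
  have "(\<Sum>v\<in>A k. f v) = (\<Sum>v\<in>A k - A (Suc k). f v) + (\<Sum>v\<in>A (Suc k). f v)"
    using Suc.prems fin by (metis lessI sum.subset_diff)
  then show ?case using Suc by simp
qed

theorem corollary4p2:
  fixes V :: "'a set" and E :: "'a \<Rightarrow> 'a \<Rightarrow> bool" and us :: "'a list"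
  assumes "simple_graph V E"
    and "beta_seq V E us"
    and "length us \<ge> 2"
    and "(\<Sum>u\<leftarrow>us. deg V E u) \<le> (length us - 1) * card V"
  shows "real (length us) \<ge>
           real (card V) / (real (card V) - sqrt ((\<Sum>v\<in>V. (real (deg V E v))^2) / real (card V)))"
proof -
  note G = assms(1)[unfolded simple_graph_def]
  note B = assms(2)[unfolded beta_seq_def]
  have finV: "finite V" using G by blast
  define r where "r = length us"
  define R where "R = r - 1"
  have R1: "R \<ge> 1" and rR: "r = Suc R" using assms(3) by (auto simp: R_def r_def)
  define A where "A i = common_nbrs V E (set (take i us))" for i
  define n where "n = card V"
  define d where "d i = deg V E (us ! i)" for i
  have AV: "A i \<subseteq> V" for i by (auto simp: A_def common_nbrs_def)
  have finA: "finite (A i)" for i using AV finV by (meson finite_subset)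
  have A0: "A 0 = V" by (simp add: A_def common_nbrs_def)
  have Asuc: "A (Suc i) = A i \<inter> {w. E (us!i) w}" if "i < r" for i
    using that by (auto simp: A_def common_nbrs_def take_Suc_conv_app_nth r_def)
  have Aanti: "A j \<subseteq> A i" if "i \<le> j" for i j
    using set_take_subset_set_take[OF that, of us] by (auto simp: A_def common_nbrs_def)
  have usA: "us ! i \<in> A i" and dmax: "d i = Max (deg V E ` A i)" if "i < r" for i
  proof -
    have "us ! i \<in> A i \<and> d i = Max (deg V E ` A i)"
    proof (cases "i = 0")
      case True then show ?thesis using B A0 by (simp add: d_def)
    next
      case False then show ?thesis using B that by (simp add: A_def d_def r_def)
    qed
    thus "us ! i \<in> A i" "d i = Max (deg V E ` A i)" by auto
  qed
  have degA: "deg V E v \<le> d i" if "i < r" "v \<in> A i" for i v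
    using that dmax[OF that(1)] finA by simp
  have degn: "deg V E v \<le> n" for v
    unfolding deg_def n_def using finV by (intro card_mono) auto
  have n0: "n > 0" using B finV by (auto simp: n_def card_gt_0_iff)
  have cardC: "card (A i - A (Suc i)) + d i \<le> n" if "i < r" for i
  proof -
    have "A i - A (Suc i) \<subseteq> V - {w\<in>V. E (us!i) w}" using Asuc[OF that] AV by auto
    hence "card (A i - A (Suc i)) \<le> card (V - {w\<in>V. E (us!i) w})"
      using finV by (intro card_mono) auto
    also have "\<dots> = n - d i" using finV by (simp add: card_Diff_subset n_def d_def deg_def)
    finally show ?thesis using degn[of "us!i"] by (simp add: d_def)
  qed
  have dR: "d R \<le> d i" if "i < R" for i
    using degA[of i "us ! R"] usA[of R] Aanti[of i R] that rR by (auto simp: d_def)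
  have sumd: "(\<Sum>i<R. real (d i)) + real (d R) \<le> real R * real n"
  proof -
    have "(\<Sum>u\<leftarrow>us. deg V E u) = (\<Sum>i<r. d i)"
      by (simp add: sum_list_sum_nth d_def r_def atLeast0LessThan)
    also have "\<dots> = (\<Sum>i<R. d i) + d R" by (simp add: rR)
    finally have "(\<Sum>i<R. d i) + d R \<le> R * n" using assms(4) by (simp add: r_def R_def n_def)
    hence "real ((\<Sum>i<R. d i) + d R) \<le> real (R * n)" by linarith
    thus ?thesis by simp
  qed
  have tel: "(\<Sum>v\<in>V. f v) = (\<Sum>i<R. \<Sum>v\<in>A i - A (Suc i). f v) + (\<Sum>v\<in>A R. f v)" for f :: "'a \<Rightarrow> real"
    using telescope[of A R f] finA Aanti A0 by auto
  have cnt: "(\<Sum>i<R. real (card (A i - A (Suc i)))) + real (card (A R)) = real n"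
    using tel[of "\<lambda>_. 1"] by (simp add: n_def)
  have sq: "(\<Sum>v\<in>V. (real (deg V E v))^2) \<le>
      (\<Sum>i<R. real (card (A i - A (Suc i))) * (real (d i))^2) + real (card (A R)) * (real (d R))^2"
  proof -
    have "(\<Sum>v\<in>A i - A (Suc i). (real (deg V E v))^2) \<le> real (card (A i - A (Suc i))) * (real (d i))^2"
      if "i < R" for i
    proof -
      have "(\<Sum>v\<in>A i - A (Suc i). (real (deg V E v))^2) \<le> (\<Sum>v\<in>A i - A (Suc i). (real (d i))^2)"
        using degA[of i] that rR by (intro sum_mono power_mono) auto
      thus ?thesis by simp
    qed
    hence "(\<Sum>i<R. \<Sum>v\<in>A i - A (Suc i). (real (deg V E v))^2) \<le> (\<Sum>i<R. real (card (A i - A (Suc i))) * (real (d i))^2)"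
      by (intro sum_mono) auto
    moreover have "(\<Sum>v\<in>A R. (real (deg V E v))^2) \<le> (\<Sum>v\<in>A R. (real (d R))^2)"
      using degA[of R] rR by (intro sum_mono power_mono) auto
    ultimately show ?thesis using tel[of "\<lambda>v. (real (deg V E v))^2"] by simp
  qed
  define x where "x i = real (card (A i - A (Suc i))) / real n" for i
  define s where "s i = real (d i) / real n" for i
  define xl where "xl = real (card (A R)) / real n"
  define sl where "sl = real (d R) / real n"
  have nr: "real n > 0" using n0 by simp
  have kb: "(\<Sum>i<R. x i * (s i)^2) + xl * sl^2 \<le> (real R / (real R + 1))^2"
  proof (rule key[OF R1])
    show "\<forall>i<R. 0 \<le> x i \<and> 0 \<le> s i \<and> x i \<le> 1 - s i \<and> sl \<le> s i"
    proof (intro allI impI conjI)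
      fix i assume i: "i < R"
      show "0 \<le> x i" "0 \<le> s i" by (simp_all add: x_def s_def)
      have "real (card (A i - A (Suc i))) + real (d i) \<le> real n" using cardC[of i] i rR
        by (metis Suc_lessD less_SucI of_nat_add of_nat_le_iff)
      thus "x i \<le> 1 - s i" using nr by (simp add: x_def s_def field_simps)
      show "sl \<le> s i" using dR[OF i] nr by (simp add: sl_def s_def divide_right_mono)
    qed
    show "0 \<le> xl" "0 \<le> sl" by (simp_all add: xl_def sl_def)
    show "sl \<le> 1" using degn[of "us!R"] nr by (simp add: sl_def d_def)
    show "(\<Sum>i<R. x i) + xl = 1" using cnt nr
      by (simp add: x_def xl_def flip: sum_divide_distrib add_divide_distrib)
    show "(\<Sum>i<R. s i) + sl \<le> real R" using sumd nr
      by (simp add: s_def sl_def field_simps flip: sum_divide_distrib)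
  qed
  define c where "c = real R / (real R + 1)"
  have "(\<Sum>i<R. real (card (A i - A (Suc i))) * (real (d i))^2) + real (card (A R)) * (real (d R))^2
      = real n ^ 3 * ((\<Sum>i<R. x i * (s i)^2) + xl * sl^2)"
    using nr by (simp add: x_def s_def xl_def sl_def sum_distrib_left power2_eq_square power3_eq_cube field_simps)
  hence Q: "(\<Sum>v\<in>V. (real (deg V E v))^2) \<le> real n ^ 3 * c^2"
    using sq kb nr unfolding c_def
    by (smt (verit) mult_left_mono zero_le_power)
  define D where "D = sqrt ((\<Sum>v\<in>V. (real (deg V E v))^2) / real n)"
  have "(\<Sum>v\<in>V. (real (deg V E v))^2) / real n \<le> (real n * c)^2"
    using Q nr by (simp add: field_simps power2_eq_square power3_eq_cube)
  hence "D \<le> sqrt ((real n * c)^2)" unfolding D_def by (rule real_sqrt_le_mono)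
  moreover have "real n * c \<ge> 0" using nr by (simp add: c_def)
  ultimately have Dle: "D \<le> real n * c" by simp
  have rpos: "real r = real R + 1" using rR by simp
  have "real n - D \<ge> real n - real n * c" using Dle by simp
  also have "real n - real n * c = real n / real r" using rpos by (simp add: c_def field_simps)
  finally have den: "real n - D \<ge> real n / real r" .
  have "real n / (real n - D) \<le> real n / (real n / real r)"
  proof (rule divide_left_mono)
    show "real n / real r \<le> real n - D" by (rule den)
    show "0 \<le> real n" using nr by simp
    have "0 < real n / real r" using nr rpos by simp
    hence "0 < real n - D" using den by linarith
    thus "0 < (real n - D) * (real n / real r)" using \<open>0 < real n / real r\<close> by (rule mult_pos_pos)
  qed
  also have "\<dots> = real r" using nr by simp
  finally show ?thesis by (simp add: D_def n_def r_def)
qed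

end
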